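(* Let $A$ be a physical system with Hamiltonian $H^A=\sum_{x=1}^m a_x|x\rangle\langle x|$ with all $a_x\ge0$, let $\psi=|\psi\rangle\langle\psi|$ be a pure state on $A$, and let $\alpha\in(1/2,1)$. Then there exists a sequence of pure states $\{\chi_n\}_{n\in\mathbb{N}}$, $\chi_n$ a pure state on $A^n$, such that: (1) $\lim_{n\to\infty}\|\psi^{\otimes n}-\chi_n\|_1=0$; (2) $\chi_n$ can be expressed as a linear combination of no more than $(n+1)^m$ eigenvectors of $H^{A^n}$; (3) the energy spread of $\chi_n$ is at most $4n^\alpha\sum_{x=1}^m a_x$.
   Context: $A^n$ denotes $n$ copies of $A$ with total Hamiltonian $H^{A^n}=\sum_{i=1}^n I\otimes\cdots\otimes H^A\otimes\cdots\otimes I$ ($H^A$ in the $i$-th slot). The energy spread of a pure state on a system with Hamiltonian $H$ is the difference between the largest and smallest eigenvalues $\lambda$ of $H$ for which the state has nonzero component in the $\lambda$-eigenspace (i.e. the maximal minus minimal energy appearing when the state is written as a superposition of energy eigenvectors). *)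

theory Defs
  imports "Jordan_Normal_Form.Char_Poly" "HOL-Computational_Algebra.Polynomial"
begin

(* Complex finite-dimensional Hilbert spaces C^N are modelled by Jordan_Normal_Form
   vectors of dimension N; operators by N x N complex matrices.  The system A^n
   has dimension m^n. *)

definition cinner :: "complex vec \<Rightarrow> complex vec \<Rightarrow> complex" where
  "cinner u v = (\<Sum>i<dim_vec v. cnj (u $ i) * v $ i)"

definition unit_vec_c :: "nat \<Rightarrow> complex vec \<Rightarrow> bool" where
  "unit_vec_c N v \<longleftrightarrow> v \<in> carrier_vec N \<and> cinner v v = 1"

definition outer :: "complex vec \<Rightarrow> complex mat" where
  "outer v = mat (dim_vec v) (dim_vec v) (\<lambda>(i,j). v $ i * cnj (v $ j))"

definition adj :: "complex mat \<Rightarrow> complex mat" where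
  "adj X = mat (dim_col X) (dim_row X) (\<lambda>(i,j). cnj (X $$ (j,i)))"

definition kron :: "complex mat \<Rightarrow> complex mat \<Rightarrow> complex mat" where
  "kron X Y = mat (dim_row X * dim_row Y) (dim_col X * dim_col Y)
     (\<lambda>(i,j). X $$ (i div dim_row Y, j div dim_col Y) * Y $$ (i mod dim_row Y, j mod dim_col Y))"

primrec kron_pow :: "complex mat \<Rightarrow> nat \<Rightarrow> complex mat" where
  "kron_pow X 0 = 1\<^sub>m 1"
| "kron_pow X (Suc n) = kron (kron_pow X n) X"

definition ham_pow :: "nat \<Rightarrow> complex mat \<Rightarrow> nat \<Rightarrow> complex mat" where
  "ham_pow m H n = mat (m ^ n) (m ^ n) (\<lambda>(r,c).
     \<Sum>i<n. (kron (kron (1\<^sub>m (m ^ i)) H) (1\<^sub>m (m ^ (n - 1 - i)))) $$ (r,c))"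

(* trace norm ||X||_1 = tr sqrt(X^* X) = sum of singular values, i.e. the sum of the
   square roots of the eigenvalues (with algebraic multiplicity) of X^* X *)
definition trace_norm :: "complex mat \<Rightarrow> real" where
  "trace_norm X = sum_mset (image_mset (\<lambda>l. sqrt (cmod l)) (proots (char_poly (adj X * X))))"

definition energies_in :: "complex mat \<Rightarrow> complex vec \<Rightarrow> real set" where
  "energies_in H v = {Re k | k. \<exists>u. eigenvector H u k \<and> cinner u v \<noteq> 0}"

definition energy_spread :: "complex mat \<Rightarrow> complex vec \<Rightarrow> real" where
  "energy_spread H v = Max (energies_in H v) - Min (energies_in H v)"

end

theory Submission
  imports Defs "Jordan_Normal_Form.Schur_Decomposition"
begin


definition mtr :: "complex mat \<Rightarrow> complex" where "mtr A = (\<Sum>i<dim_row A. A $$ (i,i))"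

lemma mtr_comm: assumes "A \<in> carrier_mat n k" "B \<in> carrier_mat k n"
  shows "mtr (A*B) = mtr (B*A)"
proof -
  have "mtr (A*B) = (\<Sum>i<n. \<Sum>j<k. A$$(i,j) * B$$(j,i))"
    using assms by (auto simp add: mtr_def scalar_prod_def atLeast0LessThan intro!: sum.cong)
  also have "\<dots> = (\<Sum>j<k. \<Sum>i<n. B$$(j,i) * A$$(i,j))"
    by (subst sum.swap) (simp add: mult.commute)
  also have "\<dots> = mtr (B*A)"
    using assms by (auto simp add: mtr_def scalar_prod_def atLeast0LessThan intro!: sum.cong)
  finally show ?thesis .
qed

lemma proots_linear_prod: "proots (\<Prod>a\<leftarrow>es. [:- a, 1:]) = mset (es :: complex list)"
proof (induction es)
  case Nil then show ?case by simp
next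
  case (Cons a es)
  have nz: "(\<Prod>a\<leftarrow>es. [:- a, 1:]) \<noteq> (0::complex poly)"
    by (auto simp: prod_list_zero_iff)
  have e: "(\<Prod>a\<leftarrow>a#es. [:- a, 1:]) = [:- a, 1:] * (\<Prod>a\<leftarrow>es. [:- a, 1:])" by simp
  have "proots (\<Prod>a\<leftarrow>a#es. [:- a, 1:]) = proots [:- a, 1:] + proots (\<Prod>a\<leftarrow>es. [:- a, 1:])"
    unfolding e using nz by (intro proots_mult) auto
  then show ?case using Cons by simp
qed

lemma sum_proots_char_poly: assumes A: "(A::complex mat) \<in> carrier_mat n n"
  shows "sum_mset (proots (char_poly A)) = mtr A"
proof -
  obtain es where c: "char_poly A = (\<Prod>a\<leftarrow>es. [:- a, 1:])" and len: "length es = n"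
    using char_poly_factorized[OF A] by blast
  obtain B P Q where sd: "schur_decomposition A es = (B,P,Q)"
    by (cases "schur_decomposition A es") auto
  from schur_decomposition[OF A c sd] have sim: "similar_mat_wit A B P Q"
    and dg: "diag_mat B = es" by auto
  from sim A have C: "P \<in> carrier_mat n n" "B \<in> carrier_mat n n" "Q \<in> carrier_mat n n"
    and QP: "Q * P = 1\<^sub>m n" and APBQ: "A = P * B * Q"
    unfolding similar_mat_wit_def Let_def by auto
  have "sum_mset (proots (char_poly A)) = sum_list es"
    unfolding c proots_linear_prod by (simp add: sum_mset_sum_list)
  also have "\<dots> = mtr B" using C dg
    by (auto simp: mtr_def diag_mat_def sum_list_sum_nth atLeast0LessThan)
  also have "mtr B = mtr ((Q * P) * B)" using QP C by simp
  also have "\<dots> = mtr (Q * (P * B))" using C by simp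
  also have "\<dots> = mtr ((P * B) * Q)" using C by (intro mtr_comm) auto
  also have "\<dots> = mtr A" using APBQ by simp
  finally show ?thesis .
qed

lemma proots_idem: assumes A: "(A::complex mat) \<in> carrier_mat n n"
  and AA: "A * A = s \<cdot>\<^sub>m A" and r: "x \<in># proots (char_poly A)"
  shows "x = 0 \<or> x = s"
proof -
  have "coeff (char_poly A) n = 1" using degree_monic_char_poly[OF A] by blast
  then have "char_poly A \<noteq> 0" by auto
  then have "poly (char_poly A) x = 0" using r by simp
  then have "eigenvalue A x" using eigenvalue_root_char_poly[OF A] by simp
  then obtain v where ev: "eigenvector A v x" unfolding eigenvalue_def by auto
  then have v: "v \<in> carrier_vec n" "v \<noteq> 0\<^sub>v n" and Av: "A *\<^sub>v v = x \<cdot>\<^sub>v v"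
    using A unfolding eigenvector_def by auto
  have "(A*A) *\<^sub>v v = A *\<^sub>v (A *\<^sub>v v)" using A v by simp
  also have "\<dots> = (x*x) \<cdot>\<^sub>v v" unfolding Av using mult_mat_vec[OF A v(1)] Av
    by (simp add: smult_smult_assoc)
  finally have 1: "(A*A) *\<^sub>v v = (x*x) \<cdot>\<^sub>v v" .
  have "(A*A) *\<^sub>v v = (s \<cdot>\<^sub>m A) *\<^sub>v v" using AA by simp
  also have "\<dots> = s \<cdot>\<^sub>v (A *\<^sub>v v)" using A v by (intro eq_vecI) (auto simp: scalar_prod_def sum_distrib_left algebra_simps)
  also have "\<dots> = (s*x) \<cdot>\<^sub>v v" unfolding Av by (simp add: smult_smult_assoc)
  finally have 2: "(x*x) \<cdot>\<^sub>v v = (s*x) \<cdot>\<^sub>v v" using 1 by simp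
  obtain i where i: "i < n" "v $ i \<noteq> 0" using v by (metis eq_vecI carrier_vecD index_zero_vec)
  from 2 have "((x*x) \<cdot>\<^sub>v v) $ i = ((s*x) \<cdot>\<^sub>v v) $ i" by simp
  then have "x * x * v $ i = s * x * v $ i" using i v by simp
  then have "x * x = s * x" using i by simp
  then show ?thesis by (metis mult_cancel_right mult_zero_right)
qed

lemma sum4: "(\<Sum>k\<in>K. A * f k + B * g k + C * h k + D * l k) =
   A * sum f K + B * sum g K + C * sum h K + (D::complex) * sum l K"
  by (simp add: sum.distrib sum_distrib_left)

lemma Re_sum_mset: "Re (sum_mset R) = sum_mset (image_mset Re R)"
  by (induction R) auto

lemma sum_mset_mult_const: "sum_mset (image_mset (\<lambda>l. f l * (K::real)) R) = sum_mset (image_mset f R) * K"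
  by (induction R) (auto simp: algebra_simps)

lemma trace_norm_pure:
  fixes u v :: "complex vec"
  assumes u: "u \<in> carrier_vec N" and v: "v \<in> carrier_vec N"
    and uu: "cinner u u = 1" and vv: "cinner v v = 1"
  shows "trace_norm (outer u - outer v) = 2 * sqrt \<bar>1 - (cmod (cinner u v))\<^sup>2\<bar>"
proof -
  define c where "c = cinner u v"
  define X where "X = outer u - outer v"
  define sr where "sr = 1 - (cmod c)^2"
  define s where "s = complex_of_real sr"
  have s_eq: "s = 1 - c * cnj c" unfolding s_def sr_def
    by (simp add: complex_norm_square[symmetric])
  have du: "dim_vec u = N" and dv: "dim_vec v = N" using u v by auto
  have XC: "X \<in> carrier_mat N N" unfolding X_def outer_def using du dv by auto
  have Xe: "X $$ (i,j) = u$i * cnj (u$j) - v$i * cnj (v$j)" if "i < N" "j < N" for i j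
    unfolding X_def outer_def using that du dv by simp
  have adjX: "adj X = X"
    by (rule eq_matI) (use XC Xe in \<open>auto simp: adj_def\<close>)
  have I1: "(\<Sum>k<N. cnj (u$k) * u$k) = 1" using uu du by (simp add: cinner_def)
  have I2: "(\<Sum>k<N. cnj (v$k) * v$k) = 1" using vv dv by (simp add: cinner_def)
  have I3: "(\<Sum>k<N. cnj (u$k) * v$k) = c" using dv by (simp add: cinner_def c_def)
  have I4: "(\<Sum>k<N. cnj (v$k) * u$k) = cnj c"
    using dv by (simp add: cinner_def c_def cnj_sum mult.commute)
  define M where "M = X * X"
  have MC: "M \<in> carrier_mat N N" unfolding M_def using XC by simp
  have Me: "M $$ (i,j) = u$i * cnj (u$j) + v$i * cnj (v$j) - c * u$i * cnj (v$j) - cnj c * v$i * cnj (u$j)"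
    if ij: "i < N" "j < N" for i j
  proof -
    have "M $$ (i,j) = (\<Sum>k<N. X$$(i,k) * X$$(k,j))"
      unfolding M_def using XC ij by (auto simp: scalar_prod_def atLeast0LessThan intro!: sum.cong)
    also have "\<dots> = (\<Sum>k<N. (u$i * cnj (u$j)) * (cnj (u$k) * u$k) + (- u$i * cnj (v$j)) * (cnj (u$k) * v$k)
          + (- v$i * cnj (u$j)) * (cnj (v$k) * u$k) + (v$i * cnj (v$j)) * (cnj (v$k) * v$k))"
      using ij by (intro sum.cong refl) (simp add: Xe algebra_simps)
    also have "\<dots> = u$i * cnj (u$j) + v$i * cnj (v$j) - c * u$i * cnj (v$j) - cnj c * v$i * cnj (u$j)"
      unfolding sum4 I1 I2 I3 I4 by (simp add: algebra_simps)
    finally show ?thesis .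
  qed
  have MX: "M * X = s \<cdot>\<^sub>m X"
  proof (rule eq_matI)
    fix i j assume ij: "i < dim_row (s \<cdot>\<^sub>m X)" "j < dim_col (s \<cdot>\<^sub>m X)"
    then have ij: "i < N" "j < N" using XC by auto
    have "(M * X) $$ (i,j) = (\<Sum>k<N. M$$(i,k) * X$$(k,j))"
      using XC MC ij by (auto simp: scalar_prod_def atLeast0LessThan intro!: sum.cong)
    also have "\<dots> = (\<Sum>k<N. (u$i * cnj (u$j) - cnj c * v$i * cnj (u$j)) * (cnj (u$k) * u$k)
          + (- u$i * cnj (v$j) + cnj c * v$i * cnj (v$j)) * (cnj (u$k) * v$k)
          + (v$i * cnj (u$j) - c * u$i * cnj (u$j)) * (cnj (v$k) * u$k)
          + (- v$i * cnj (v$j) + c * u$i * cnj (v$j)) * (cnj (v$k) * v$k))"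
      using ij by (intro sum.cong refl) (simp add: Xe Me algebra_simps)
    also have "\<dots> = s * X $$ (i,j)"
      unfolding sum4 I1 I2 I3 I4 s_eq Xe[OF ij] by (simp add: algebra_simps)
    finally show "(M * X) $$ (i,j) = (s \<cdot>\<^sub>m X) $$ (i,j)" using ij XC by simp
  qed (use XC MC in auto)
  have MM: "M * M = s \<cdot>\<^sub>m M"
  proof -
    have "M * M = (M * X) * X" unfolding M_def using XC by (simp add: assoc_mult_mat[of _ N N _ N _ N])
    also have "\<dots> = (s \<cdot>\<^sub>m X) * X" by (simp only: MX)
    also have "\<dots> = s \<cdot>\<^sub>m M" unfolding M_def using XC by (simp add: mult_smult_assoc_mat)
    finally show ?thesis .
  qed
  have trM: "mtr M = 2 * s"
  proof -
    have "mtr M = (\<Sum>k<N. 1 * (cnj (u$k) * u$k) + (- c) * (cnj (v$k) * u$k)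
         + (- cnj c) * (cnj (u$k) * v$k) + 1 * (cnj (v$k) * v$k))"
      unfolding mtr_def using MC by (intro sum.cong) (auto simp: Me algebra_simps)
    also have "\<dots> = 2 * s" unfolding sum4 I1 I2 I3 I4 s_eq by (simp add: algebra_simps)
    finally show ?thesis .
  qed
  define R where "R = proots (char_poly M)"
  have R01: "l = 0 \<or> l = s" if "l \<in># R" for l
    using proots_idem[OF MC MM] that unfolding R_def by blast
  have sR: "sum_mset R = 2 * s" unfolding R_def sum_proots_char_poly[OF MC] trM ..
  have tn: "trace_norm X = sum_mset (image_mset (\<lambda>l. sqrt (cmod l)) R)"
    unfolding trace_norm_def R_def adjX M_def ..
  have "trace_norm X = 2 * sqrt \<bar>sr\<bar>"
  proof (cases "sr = 0")
    case True
    then have "l = 0" if "l \<in># R" for l using R01[OF that] s_def by auto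
    then have "image_mset (\<lambda>l. sqrt (cmod l)) R = image_mset (\<lambda>l. 0) R"
      by (intro image_mset_cong) auto
    then show ?thesis unfolding tn using True by simp
  next
    case False
    have "image_mset (\<lambda>l. sqrt (cmod l)) R = image_mset (\<lambda>l. Re l * (sqrt \<bar>sr\<bar> / sr)) R"
    proof (intro image_mset_cong)
      fix l assume "l \<in># R"
      then have "l = 0 \<or> l = s" by (rule R01)
      then show "sqrt (cmod l) = Re l * (sqrt \<bar>sr\<bar> / sr)"
        using False by (elim disjE) (auto simp: s_def)
    qed
    then have "trace_norm X = sum_mset (image_mset (\<lambda>l. Re l * (sqrt \<bar>sr\<bar> / sr)) R)"
      unfolding tn by (simp only:)
    also have "\<dots> = Re (sum_mset R) * (sqrt \<bar>sr\<bar> / sr)"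
      by (simp only: sum_mset_mult_const Re_sum_mset)
    also have "\<dots> = 2 * sqrt \<bar>sr\<bar>" unfolding sR s_def using False by simp
    finally show ?thesis .
  qed
  then show ?thesis unfolding X_def sr_def c_def .
qed



definition kv :: "complex vec \<Rightarrow> complex vec \<Rightarrow> complex vec" where
  "kv x y = vec (dim_vec x * dim_vec y) (\<lambda>i. x $ (i div dim_vec y) * y $ (i mod dim_vec y))"

primrec pv :: "complex vec \<Rightarrow> nat \<Rightarrow> complex vec" where
  "pv psi 0 = vec 1 (\<lambda>_. 1)"
| "pv psi (Suc n) = kv (pv psi n) psi"

lemma dim_pv[simp]: "dim_vec (pv psi n) = dim_vec psi ^ n"
  by (induction n) (auto simp: kv_def mult.commute)

lemma pv_Suc_index: "r < dim_vec psi ^ Suc n \<Longrightarrow>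
   pv psi (Suc n) $ r = pv psi n $ (r div dim_vec psi) * psi $ (r mod dim_vec psi)"
  by (simp add: kv_def mult.commute)

lemma kron_outer: assumes "dim_vec y > 0"
  shows "kron (outer x) (outer y) = outer (kv x y)"
proof (rule eq_matI)
  fix i j assume "i < dim_row (outer (kv x y))" "j < dim_col (outer (kv x y))"
  then have ij: "i < dim_vec x * dim_vec y" "j < dim_vec x * dim_vec y" by (auto simp: outer_def kv_def)
  then have "i div dim_vec y < dim_vec x" "j div dim_vec y < dim_vec x"
    by (auto simp: less_mult_imp_div_less)
  moreover have "i mod dim_vec y < dim_vec y" "j mod dim_vec y < dim_vec y" using assms by auto
  ultimately show "kron (outer x) (outer y) $$ (i, j) = outer (kv x y) $$ (i, j)"
    using ij by (simp add: kron_def outer_def kv_def)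
qed (auto simp: kron_def outer_def kv_def)

lemma kron_pow_outer: assumes "dim_vec psi > 0"
  shows "kron_pow (outer psi) n = outer (pv psi n)"
proof (induction n)
  case 0
  show ?case by (rule eq_matI) (auto simp: outer_def)
next
  case (Suc n)
  then show ?case using kron_outer[OF assms] by simp
qed

definition En :: "nat \<Rightarrow> (nat \<Rightarrow> real) \<Rightarrow> nat \<Rightarrow> nat \<Rightarrow> real" where
  "En m a n r = (\<Sum>j<n. a ((r div m^j) mod m))"

lemma En_Suc: "En m a (Suc n) r = a (r mod m) + En m a n (r div m)"
  unfolding En_def sum.lessThan_Suc_shift
  by (simp add: div_mult2_eq)

lemma En_0[simp]: "En m a 0 r = 0" by (simp add: En_def)

lemma kron_entry: "X \<in> carrier_mat a1 b1 \<Longrightarrow> Y \<in> carrier_mat a2 b2 \<Longrightarrow> i < a1*a2 \<Longrightarrow> j < b1*b2 \<Longrightarrow>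
   kron X Y $$ (i,j) = X $$ (i div a2, j div b2) * Y $$ (i mod a2, j mod b2)"
  by (simp add: kron_def)

lemma kron_carrier: "X \<in> carrier_mat a1 b1 \<Longrightarrow> Y \<in> carrier_mat a2 b2 \<Longrightarrow> kron X Y \<in> carrier_mat (a1*a2) (b1*b2)"
  by (simp add: kron_def)

lemma div_mod_eqI: "p div m = q div m \<Longrightarrow> p mod m = q mod (m::nat) \<Longrightarrow> p = q"
  by (metis div_mult_mod_eq)

lemma ham_term:
  assumes m: "m > 0" and HA: "HA = mat m m (\<lambda>(i,j). if i = j then complex_of_real (a i) else 0)"
    and i: "i < n" and r: "r < m^n" and c: "c < m^n"
  shows "kron (kron (1\<^sub>m (m ^ i)) HA) (1\<^sub>m (m ^ (n - 1 - i))) $$ (r,c)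
      = (if r = c then complex_of_real (a ((r div m^(n-1-i)) mod m)) else 0)"
proof -
  define K where "K = m^(n-1-i)"
  define L where "L = m^i"
  have Kp: "K > 0" using m by (simp add: K_def)
  have Lp: "L > 0" using m by (simp add: L_def)
  have nn: "n = i + Suc (n-1-i)" using i by simp
  have mn: "m^n = L*m*K" unfolding K_def L_def
    by (subst nn, simp only: power_add power_Suc mult.assoc)
  have HAC: "HA \<in> carrier_mat m m" using HA by simp
  have XC: "kron (1\<^sub>m L) HA \<in> carrier_mat (L*m) (L*m)" by (rule kron_carrier) (use HAC in auto)
  have rK: "r < (L*m)*K" "c < (L*m)*K" using r c mn by auto
  have pK: "r div K < L*m" "c div K < L*m" using rK by (auto simp: less_mult_imp_div_less)
  have e1: "kron (kron (1\<^sub>m L) HA) (1\<^sub>m K) $$ (r,c)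
      = kron (1\<^sub>m L) HA $$ (r div K, c div K) * (1\<^sub>m K) $$ (r mod K, c mod K)"
    by (rule kron_entry[OF XC _ rK]) auto
  have e2: "kron (1\<^sub>m L) HA $$ (r div K, c div K) =
     (1\<^sub>m L) $$ (r div K div m, c div K div m) * HA $$ (r div K mod m, c div K mod m)"
    by (rule kron_entry[OF _ HAC pK]) auto
  have b: "r div K div m < L" "c div K div m < L" using pK by (auto simp: less_mult_imp_div_less)
  have b2: "r div K mod m < m" "c div K mod m < m" "r mod K < K" "c mod K < K" using m Kp by auto
  have "kron (kron (1\<^sub>m L) HA) (1\<^sub>m K) $$ (r,c)
      = (if r = c then complex_of_real (a ((r div K) mod m)) else 0)"
  proof (cases "r = c")
    case True
    then show ?thesis unfolding e1 e2 using b b2 HA by simp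
  next
    case False
    then have "r div K \<noteq> c div K \<or> r mod K \<noteq> c mod K" using div_mod_eqI by blast
    moreover have "r div K div m \<noteq> c div K div m \<or> r div K mod m \<noteq> c div K mod m" if "r div K \<noteq> c div K"
      using div_mod_eqI that by blast
    ultimately show ?thesis unfolding e1 e2 using b b2 HA False by auto
  qed
  then show ?thesis unfolding K_def L_def .
qed

lemma ham_pow_diag:
  assumes m: "m > 0" and HA: "HA = mat m m (\<lambda>(i,j). if i = j then complex_of_real (a i) else 0)"
  shows "ham_pow m HA n = mat (m^n) (m^n) (\<lambda>(r,c). if r = c then complex_of_real (En m a n r) else 0)"
proof (rule eq_matI)
  fix r c assume "r < dim_row (mat (m^n) (m^n) (\<lambda>(r,c). if r = c then complex_of_real (En m a n r) else 0))"
    "c < dim_col (mat (m^n) (m^n) (\<lambda>(r,c). if r = c then complex_of_real (En m a n r) else 0))"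
  then have rc: "r < m^n" "c < m^n" by auto
  have "ham_pow m HA n $$ (r,c) = (\<Sum>i<n. (if r = c then complex_of_real (a ((r div m^(n-1-i)) mod m)) else 0))"
    unfolding ham_pow_def using rc ham_term[OF m HA _ rc] by simp
  also have "\<dots> = (if r = c then complex_of_real (En m a n r) else 0)"
  proof (cases "r = c")
    case True
    have "(\<Sum>i<n. complex_of_real (a ((r div m^(n-1-i)) mod m))) = (\<Sum>i<n. complex_of_real (a ((r div m^(n - Suc i)) mod m)))"
      by simp
    also have "\<dots> = (\<Sum>j<n. complex_of_real (a ((r div m^j) mod m)))"
      by (rule sum.nat_diff_reindex)
    finally show ?thesis using True by (simp add: En_def)
  qed simp
  finally show "ham_pow m HA n $$ (r,c) = mat (m^n) (m^n) (\<lambda>(r,c). if r = c then complex_of_real (En m a n r) else 0) $$ (r,c)"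
    using rc by simp
qed (auto simp: ham_pow_def)



lemma shift_block: "sum f {q*m..<q*m+m} = (\<Sum>d<(m::nat). f (q*m+d))"
proof -
  have "sum f {q*m..<q*m+m} = sum f {0 + q*m..<m + q*m}" by (simp add: add.commute)
  also have "\<dots> = (\<Sum>i=0..<m. f (i + q*m))" by (rule sum.shift_bounds_nat_ivl)
  also have "\<dots> = (\<Sum>d<m. f (q*m+d))" by (simp add: atLeast0LessThan add.commute)
  finally show ?thesis .
qed

lemma split_sum: "(\<Sum>r<(k::nat)*m. f r) = (\<Sum>q<k. \<Sum>d<m. f (q*m+d))"
  using sum.nat_group[of f m k] by (simp add: shift_block)

locale LS =
  fixes m :: nat and a :: "nat \<Rightarrow> real" and psi :: "complex vec"
  assumes m: "m > 0" and psiC: "psi \<in> carrier_vec m"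
    and psum: "(\<Sum>x<m. (cmod (psi $ x))^2) = 1"
    and a_nonneg: "\<And>x. x < m \<Longrightarrow> a x \<ge> 0"
begin

definition p :: "nat \<Rightarrow> real" where "p x = (cmod (psi $ x))^2"
definition w :: "nat \<Rightarrow> nat \<Rightarrow> real" where "w n r = (cmod (pv psi n $ r))^2"
definition mu :: real where "mu = (\<Sum>x<m. p x * a x)"
definition sigma :: real where "sigma = (\<Sum>x<m. p x * (a x - mu)^2)"
abbreviation E where "E \<equiv> En m a"

lemma psum': "(\<Sum>x<m. p x) = 1" using psum by (simp add: p_def)
lemma dpsi: "dim_vec psi = m" using psiC by auto
lemma w_nonneg: "w n r \<ge> 0" by (simp add: w_def)
lemma p_nonneg: "p x \<ge> 0" by (simp add: p_def)

lemma step_sum: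
  "(\<Sum>r<m^Suc n. w (Suc n) r * g (r div m) (r mod m)) = (\<Sum>q<m^n. w n q * (\<Sum>d<m. p d * g q d))"
proof -
  have "(\<Sum>r<m^Suc n. w (Suc n) r * g (r div m) (r mod m)) =
     (\<Sum>q<m^n. \<Sum>d<m. w (Suc n) (q*m+d) * g ((q*m+d) div m) ((q*m+d) mod m))"
    by (simp only: power_Suc2 split_sum)
  also have "\<dots> = (\<Sum>q<m^n. \<Sum>d<m. w n q * (p d * g q d))"
  proof (intro sum.cong refl)
    fix q d assume q: "q \<in> {..<m^n}" and d: "d \<in> {..<m}"
    have qd: "(q*m+d) div m = q" "(q*m+d) mod m = d" using d m by auto
    have lt: "q*m+d < m^Suc n"
    proof -
      have "q*m+d < q*m+m" using d by simp
      also have "\<dots> = (q+1)*m" by simp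
      also have "\<dots> \<le> m^n * m" using q by (intro mult_right_mono) auto
      finally show ?thesis by (simp add: power_Suc2 mult.commute)
    qed
    have "w (Suc n) (q*m+d) = w n q * p d"
      unfolding w_def p_def using pv_Suc_index[of "q*m+d" psi n] lt qd dpsi
      by (simp add: norm_mult power_mult_distrib)
    then show "w (Suc n) (q*m+d) * g ((q*m+d) div m) ((q*m+d) mod m) = w n q * (p d * g q d)"
      using qd by simp
  qed
  also have "\<dots> = (\<Sum>q<m^n. w n q * (\<Sum>d<m. p d * g q d))"
    by (simp add: sum_distrib_left)
  finally show ?thesis .
qed

lemma w_total: "(\<Sum>r<m^n. w n r) = 1"
proof (induction n)
  case 0
  then show ?case by (simp add: w_def)
next
  case (Suc n)
  have "(\<Sum>r<m^Suc n. w (Suc n) r) = (\<Sum>r<m^Suc n. w (Suc n) r * (\<lambda>_ _. 1) (r div m) (r mod m))" by simp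
  also have "\<dots> = (\<Sum>q<m^n. w n q * (\<Sum>d<m. p d * 1))" by (rule step_sum)
  also have "\<dots> = 1" using Suc psum' by simp
  finally show ?case .
qed

lemma w_mean: "(\<Sum>r<m^n. w n r * E n r) = n * mu"
proof (induction n)
  case 0
  then show ?case by simp
next
  case (Suc n)
  have "(\<Sum>r<m^Suc n. w (Suc n) r * E (Suc n) r) =
     (\<Sum>r<m^Suc n. w (Suc n) r * (\<lambda>q d. a d + E n q) (r div m) (r mod m))" by (simp add: En_Suc)
  also have "\<dots> = (\<Sum>q<m^n. w n q * (\<Sum>d<m. p d * (a d + E n q)))" by (rule step_sum)
  also have "\<dots> = (\<Sum>q<m^n. w n q * mu + w n q * E n q)"
    by (intro sum.cong refl) (simp add: algebra_simps sum.distrib mu_def psum' flip: sum_distrib_right)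
  also have "\<dots> = mu + n * mu" using Suc w_total by (simp add: sum.distrib flip: sum_distrib_right)
  finally show ?case by (simp add: algebra_simps)
qed

lemma pZ: "(\<Sum>d<m. p d * (a d - mu)) = 0"
  by (simp add: algebra_simps sum_subtractf mu_def psum' flip: sum_distrib_right)

lemma w_var: "(\<Sum>r<m^n. w n r * (E n r - n * mu)^2) = n * sigma"
proof (induction n)
  case 0
  then show ?case by simp
next
  case (Suc n)
  have "(\<Sum>r<m^Suc n. w (Suc n) r * (E (Suc n) r - Suc n * mu)^2) =
     (\<Sum>r<m^Suc n. w (Suc n) r * (\<lambda>q d. ((E n q - n * mu) + (a d - mu))^2) (r div m) (r mod m))"
    by (intro sum.cong refl) (simp add: En_Suc algebra_simps)
  also have "\<dots> = (\<Sum>q<m^n. w n q * (\<Sum>d<m. p d * ((E n q - n * mu) + (a d - mu))^2))" by (rule step_sum)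
  also have "\<dots> = (\<Sum>q<m^n. w n q * (E n q - n * mu)^2 + w n q * sigma)"
  proof (intro sum.cong refl)
    fix q
    define Y where "Y = E n q - n * mu"
    have "(\<Sum>d<m. p d * (Y + (a d - mu))^2) = (\<Sum>d<m. Y^2 * p d + (2*Y) * (p d * (a d - mu)) + p d * (a d - mu)^2)"
      by (intro sum.cong refl) (simp add: power2_eq_square algebra_simps)
    also have "\<dots> = Y^2 + sigma"
      by (simp add: sum.distrib psum' pZ sigma_def flip: sum_distrib_left)
    finally show "w n q * (\<Sum>d<m. p d * ((E n q - n * mu) + (a d - mu))^2) = w n q * (E n q - n * mu)^2 + w n q * sigma"
      by (simp add: Y_def algebra_simps)
  qed
  also have "\<dots> = n * sigma + sigma" using Suc w_total by (simp add: sum.distrib flip: sum_distrib_right)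
  finally show ?case by (simp add: algebra_simps)
qed

end


definition dmat :: "nat \<Rightarrow> (nat \<Rightarrow> real) \<Rightarrow> complex mat" where
  "dmat N D = mat N N (\<lambda>(r,c). if r = c then complex_of_real (D r) else 0)"

lemma dmat_mult_vec: assumes "u \<in> carrier_vec N" "r < N"
  shows "(dmat N D *\<^sub>v u) $ r = complex_of_real (D r) * u $ r"
proof -
  have "(dmat N D *\<^sub>v u) $ r = (\<Sum>j<N. (if r = j then complex_of_real (D r) else 0) * u $ j)"
    using assms by (auto simp: dmat_def scalar_prod_def atLeast0LessThan intro!: sum.cong)
  also have "\<dots> = (\<Sum>j<N. if r = j then complex_of_real (D r) * u $ r else 0)"
    by (intro sum.cong) auto
  also have "\<dots> = complex_of_real (D r) * u $ r" using assms(2) by simp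
  finally show ?thesis .
qed

lemma dmat_eigenvector: assumes "eigenvector (dmat N D) u k" "r < N" "u $ r \<noteq> 0"
  shows "k = complex_of_real (D r)"
proof -
  have u: "u \<in> carrier_vec N" and Hu: "dmat N D *\<^sub>v u = k \<cdot>\<^sub>v u"
    using assms(1) unfolding eigenvector_def dmat_def by auto
  have 1: "(dmat N D *\<^sub>v u) $ r = complex_of_real (D r) * u $ r" by (rule dmat_mult_vec[OF u assms(2)])
  have 2: "(k \<cdot>\<^sub>v u) $ r = k * u $ r" using u assms(2) by simp
  have "complex_of_real (D r) * u $ r = k * u $ r" using 1 2 Hu by metis
  then show ?thesis using assms(3) by auto
qed

lemma spread_diag:
  assumes v: "v \<in> carrier_vec N" and r0: "r0 < N" "v $ r0 \<noteq> 0"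
    and bnd: "\<And>r. r < N \<Longrightarrow> v $ r \<noteq> 0 \<Longrightarrow> \<bar>D r - c\<bar> \<le> b"
  shows "energy_spread (dmat N D) v \<le> 2 * b"
proof -
  define W where "W = D ` {r. r < N \<and> v $ r \<noteq> 0}"
  have finW: "finite W" unfolding W_def by simp
  have sub: "energies_in (dmat N D) v \<subseteq> W"
  proof
    fix t assume "t \<in> energies_in (dmat N D) v"
    then obtain k u where t: "t = Re k" and ev: "eigenvector (dmat N D) u k" and ci: "cinner u v \<noteq> 0"
      unfolding energies_in_def by auto
    from ci have "(\<Sum>i<N. cnj (u $ i) * v $ i) \<noteq> 0" using v by (simp add: cinner_def)
    then obtain r where r: "r < N" "cnj (u $ r) * v $ r \<noteq> 0"
      by (rule sum.not_neutral_contains_not_neutral) auto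
    then have "u $ r \<noteq> 0" "v $ r \<noteq> 0" by auto
    with dmat_eigenvector[OF ev r(1)] have "k = complex_of_real (D r)" by simp
    then show "t \<in> W" unfolding W_def t using r \<open>v $ r \<noteq> 0\<close> by auto
  qed
  have fin: "finite (energies_in (dmat N D) v)" using finite_subset[OF sub finW] .
  have ev0: "eigenvector (dmat N D) (unit_vec N r0) (complex_of_real (D r0))"
    unfolding eigenvector_def
  proof (intro conjI)
    show "(unit_vec N r0 :: complex vec) \<in> carrier_vec (dim_row (dmat N D))" by (simp add: dmat_def)
    show "(unit_vec N r0 :: complex vec) \<noteq> 0\<^sub>v (dim_row (dmat N D))"
    proof
      assume "(unit_vec N r0 :: complex vec) = 0\<^sub>v (dim_row (dmat N D))"
      then have "(unit_vec N r0 :: complex vec) = 0\<^sub>v N" by (simp add: dmat_def)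
      then have "(unit_vec N r0 :: complex vec) $ r0 = 0\<^sub>v N $ r0" by (rule arg_cong)
      then show False using r0 by simp
    qed
    show "dmat N D *\<^sub>v unit_vec N r0 = complex_of_real (D r0) \<cdot>\<^sub>v unit_vec N r0"
    proof (rule eq_vecI)
      fix i assume "i < dim_vec (complex_of_real (D r0) \<cdot>\<^sub>v unit_vec N r0)"
      then have i: "i < N" by simp
      have "(dmat N D *\<^sub>v unit_vec N r0) $ i = complex_of_real (D i) * unit_vec N r0 $ i"
        by (rule dmat_mult_vec) (auto simp: i)
      then show "(dmat N D *\<^sub>v unit_vec N r0) $ i = (complex_of_real (D r0) \<cdot>\<^sub>v unit_vec N r0) $ i"
        using i r0 by simp
    qed (simp add: dmat_def)
  qed
  have "cinner (unit_vec N r0) v = (\<Sum>i<N. (if i = r0 then v $ r0 else 0))"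
    unfolding cinner_def using v r0 by (intro sum.cong) auto
  also have "\<dots> = v $ r0" using r0 by simp
  finally have "cinner (unit_vec N r0) v \<noteq> 0" using r0 by simp
  with ev0 have inE: "D r0 \<in> energies_in (dmat N D) v"
    unfolding energies_in_def by (auto intro!: exI[of _ "complex_of_real (D r0)"])
  have ne: "energies_in (dmat N D) v \<noteq> {}" using inE by auto
  have "Max (energies_in (dmat N D) v) \<in> W" using Max_in[OF fin ne] sub by auto
  then have "Max (energies_in (dmat N D) v) \<le> c + b" unfolding W_def using bnd by force
  moreover have "Min (energies_in (dmat N D) v) \<in> W" using Min_in[OF fin ne] sub by auto
  then have "Min (energies_in (dmat N D) v) \<ge> c - b" unfolding W_def using bnd by force
  ultimately show ?thesis unfolding energy_spread_def by simp
qed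

lemma decomp_diag:
  assumes v: "v \<in> carrier_vec N" and vals: "\<And>r. r < N \<Longrightarrow> D r \<in> Vals"
    and finV: "finite Vals" and cardV: "card Vals \<le> K"
  shows "\<exists>k e c. k \<le> K \<and> (\<forall>j<k. \<exists>ev. eigenvector (dmat N D) (e j) ev) \<and>
          (\<forall>i<N. v $ i = (\<Sum>j<k. c j * e j $ i))"
proof -
  define V where "V = D ` {r. r < N \<and> v $ r \<noteq> 0}"
  have VV: "V \<subseteq> Vals" unfolding V_def using vals by auto
  have finV': "finite V" unfolding V_def by simp
  define vs where "vs = sorted_list_of_set V"
  have svs: "set vs = V" "distinct vs" unfolding vs_def using finV' by auto
  define k where "k = length vs"
  have kc: "k = card V" unfolding k_def using distinct_card[OF svs(2)] svs(1) by simp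
  define e where "e j = vec N (\<lambda>r. if D r = vs ! j then v $ r else 0)" for j
  have kK: "k \<le> K" unfolding kc using card_mono[OF finV VV] cardV by simp
  have eig: "eigenvector (dmat N D) (e j) (complex_of_real (vs ! j))" if j: "j < k" for j
    unfolding eigenvector_def
  proof (intro conjI)
    show "e j \<in> carrier_vec (dim_row (dmat N D))" by (simp add: dmat_def e_def)
    have "vs ! j \<in> V" using j svs unfolding k_def by (metis nth_mem)
    then obtain r where r: "r < N" "v $ r \<noteq> 0" "D r = vs ! j" unfolding V_def by auto
    show "e j \<noteq> 0\<^sub>v (dim_row (dmat N D))"
    proof
      assume "e j = 0\<^sub>v (dim_row (dmat N D))"
      then have "e j = 0\<^sub>v N" by (simp add: dmat_def)
      then have "e j $ r = 0\<^sub>v N $ r" by (rule arg_cong)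
      then show False using r by (simp add: e_def)
    qed
    show "dmat N D *\<^sub>v e j = complex_of_real (vs ! j) \<cdot>\<^sub>v e j"
    proof (rule eq_vecI)
      fix i assume "i < dim_vec (complex_of_real (vs ! j) \<cdot>\<^sub>v e j)"
      then have i: "i < N" by (simp add: e_def)
      have "(dmat N D *\<^sub>v e j) $ i = complex_of_real (D i) * e j $ i"
        by (rule dmat_mult_vec) (auto simp: e_def i)
      then show "(dmat N D *\<^sub>v e j) $ i = (complex_of_real (vs ! j) \<cdot>\<^sub>v e j) $ i"
        using i by (simp add: e_def)
    qed (simp add: dmat_def e_def)
  qed
  have dec: "v $ i = (\<Sum>j<k. 1 * e j $ i)" if i: "i < N" for i
  proof -
    have "(\<Sum>j<k. 1 * e j $ i) = (\<Sum>j<k. (\<lambda>x. if x = D i then v $ i else 0) (vs ! j))"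
      using i by (intro sum.cong) (auto simp: e_def)
    also have "\<dots> = sum_list (map (\<lambda>x. if x = D i then v $ i else 0) vs)"
      unfolding sum_list_sum_nth k_def by (simp add: atLeast0LessThan)
    also have "\<dots> = (\<Sum>x\<in>V. if x = D i then v $ i else 0)"
      using svs by (simp add: sum_list_distinct_conv_sum_set)
    also have "\<dots> = (if D i \<in> V then v $ i else 0)"
      using finV' by (rule sum.delta)
    also have "\<dots> = v $ i"
    proof (cases "v $ i = 0")
      case False
      then have "D i \<in> V" unfolding V_def using i by (intro imageI) simp
      then show ?thesis by simp
    qed simp
    finally show ?thesis by simp
  qed
  show ?thesis
    by (rule exI[of _ k], rule exI[of _ e], rule exI[of _ "\<lambda>_. 1"]) (use kK eig dec in blast)
qed

lemma card_types:
  assumes m: "m > 0"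
  shows "En m a n r \<in> (\<lambda>t. \<Sum>x<m. a x * real (t x)) ` (Pi\<^sub>E {..<m} (\<lambda>_. {..n}))"
proof -
  define dig where "dig j = (r div m^j) mod m" for j
  define t where "t = (\<lambda>x\<in>{..<m}. card {j \<in> {..<n}. dig j = x})"
  have tP: "t \<in> Pi\<^sub>E {..<m} (\<lambda>_. {..n})"
  proof -
    have "card {j \<in> {..<n}. dig j = x} \<le> n" for x
      using card_mono[of "{..<n}" "{j \<in> {..<n}. dig j = x}"] by auto
    then show ?thesis unfolding t_def by auto
  qed
  have "En m a n r = (\<Sum>j<n. a (dig j))" unfolding En_def dig_def ..
  also have "\<dots> = (\<Sum>x<m. \<Sum>j\<in>{j \<in> {..<n}. dig j = x}. a (dig j))"
    by (rule sum.group[symmetric]) (use m in \<open>auto simp: dig_def\<close>)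
  also have "\<dots> = (\<Sum>x<m. a x * real (t x))"
    by (intro sum.cong refl) (simp add: t_def)
  finally show ?thesis using tP by blast
qed

lemma card_vals: "card ((\<lambda>t. \<Sum>x<m. a x * real (t x)) ` (Pi\<^sub>E {..<m} (\<lambda>_. {..n::nat}))) \<le> (n+1)^m"
proof -
  have "card ((\<lambda>t. \<Sum>x<m. a x * real (t x)) ` (Pi\<^sub>E {..<m} (\<lambda>_. {..n::nat}))) \<le> card (Pi\<^sub>E {..<m} (\<lambda>_. {..n::nat}))"
    by (rule card_image_le) (simp add: finite_PiE)
  also have "\<dots> = (n+1)^m" by (simp add: card_PiE)
  finally show ?thesis .
qed



lemma cinner_self: "cinner v v = complex_of_real (\<Sum>i<dim_vec v. (cmod (v $ i))^2)"
  unfolding cinner_def of_real_sum by (intro sum.cong refl) (metis complex_norm_square mult.commute)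

lemma cnj_mult_self: "cnj z * z = complex_of_real ((cmod z)^2)"
  by (metis complex_norm_square mult.commute)

lemma unit_nonzero: assumes "unit_vec_c N v" shows "\<exists>r<N. v $ r \<noteq> 0"
proof -
  from assms have v: "v \<in> carrier_vec N" and "cinner v v = 1" unfolding unit_vec_c_def by auto
  then have "(\<Sum>i<N. cnj (v $ i) * v $ i) \<noteq> 0" by (simp add: cinner_def)
  then obtain r where "r \<in> {..<N}" "cnj (v $ r) * v $ r \<noteq> 0"
    by (rule sum.not_neutral_contains_not_neutral)
  then show ?thesis by auto
qed

locale LS2 = LS +
  fixes \<alpha> :: real
  assumes alpha: "1/2 < \<alpha>" "\<alpha> < 1"
begin

definition S :: real where "S = (\<Sum>x<m. a x)"
definition Ty :: "nat \<Rightarrow> nat set" where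
  "Ty n = {r. r < m^n \<and> \<bar>E n r - n * mu\<bar> \<le> real n powr \<alpha> * S}"
definition wT :: "nat \<Rightarrow> real" where "wT n = (\<Sum>r\<in>Ty n. w n r)"
definition chi :: "nat \<Rightarrow> complex vec" where
  "chi n = (if wT n > 0 then vec (m^n) (\<lambda>r. if r \<in> Ty n then pv psi n $ r / complex_of_real (sqrt (wT n)) else 0)
            else unit_vec (m^n) 0)"

lemma S_nonneg: "S \<ge> 0" unfolding S_def by (intro sum_nonneg) (use a_nonneg in auto)
lemma Ty_sub: "Ty n \<subseteq> {..<m^n}" unfolding Ty_def by auto
lemma Ty_fin: "finite (Ty n)" using Ty_sub finite_subset by blast
lemma mpos: "m^n > 0" using m by simp

lemma wT_bounds: "0 \<le> wT n" "wT n \<le> 1"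
proof -
  show "0 \<le> wT n" unfolding wT_def by (simp add: sum_nonneg w_nonneg)
  have "wT n \<le> (\<Sum>r<m^n. w n r)" unfolding wT_def
    by (rule sum_mono2) (use Ty_sub w_nonneg in auto)
  then show "wT n \<le> 1" using w_total by simp
qed

lemma a_le_S: "x < m \<Longrightarrow> a x \<le> S"
  unfolding S_def by (rule member_le_sum) (use a_nonneg in auto)

lemma sigma_le: "sigma \<le> S^2"
proof -
  have mu0: "mu \<ge> 0" unfolding mu_def by (intro sum_nonneg) (use a_nonneg p_nonneg in auto)
  have "mu \<le> (\<Sum>x<m. p x * S)" unfolding mu_def
    by (rule sum_mono) (use a_le_S p_nonneg in \<open>auto intro: mult_left_mono\<close>)
  also have "\<dots> = S" using psum' by (simp flip: sum_distrib_right)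
  finally have muS: "mu \<le> S" .
  have "sigma \<le> (\<Sum>x<m. p x * S^2)" unfolding sigma_def
  proof (rule sum_mono)
    fix x assume "x \<in> {..<m}"
    then have "\<bar>a x - mu\<bar> \<le> S" using a_le_S[of x] a_nonneg[of x] mu0 muS by auto
    then have "(a x - mu)^2 \<le> S^2" using S_nonneg by (simp add: power2_le_iff_abs_le)
    then show "p x * (a x - mu)^2 \<le> p x * S^2" using p_nonneg by (simp add: mult_left_mono)
  qed
  also have "\<dots> = S^2" using psum' by (simp flip: sum_distrib_right)
  finally show ?thesis .
qed

lemma atyp: assumes n: "n \<ge> 1" shows "1 - wT n \<le> real n powr (1 - 2*\<alpha>)"
proof -
  define Dset where "Dset = {..<m^n} - Ty n"
  have diff: "1 - wT n = (\<Sum>r\<in>Dset. w n r)"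
    unfolding Dset_def wT_def using sum_diff[OF _ Ty_sub, where f="w n"] w_total by simp
  have pw: "real n powr (1 - 2*\<alpha>) \<ge> 0" by simp
  show ?thesis
  proof (cases "S = 0")
    case True
    have "a x = 0" if "x < m" for x
      using True a_nonneg that unfolding S_def by (subst (asm) sum_nonneg_eq_0_iff) auto
    then have E0: "E n r = 0" for r unfolding En_def using m by simp
    have "mu = 0" unfolding mu_def using \<open>\<And>x. x < m \<Longrightarrow> a x = 0\<close> by simp
    then have "Dset = {}" unfolding Dset_def Ty_def using E0 True by auto
    then show ?thesis using diff pw by simp
  next
    case False
    then have Sp: "S > 0" using S_nonneg by simp
    have np: "real n > 0" using n by simp
    define t where "t = real n powr \<alpha> * S"
    have tp: "t > 0" unfolding t_def using Sp np by simp
    have "(\<Sum>r\<in>Dset. w n r) \<le> (\<Sum>r\<in>Dset. w n r * (E n r - n * mu)^2 / t^2)"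
    proof (rule sum_mono)
      fix r assume "r \<in> Dset"
      then have "t < \<bar>E n r - n * mu\<bar>" unfolding Dset_def Ty_def t_def by auto
      then have "t^2 < (E n r - n * mu)^2" using tp
        using power_strict_mono[of t "\<bar>E n r - n * mu\<bar>" 2] by simp
      then have "1 \<le> (E n r - n * mu)^2 / t^2" using tp by simp
      then show "w n r \<le> w n r * (E n r - n * mu)^2 / t^2"
        using w_nonneg[of n r] mult_left_mono[of 1 "(E n r - n * mu)^2 / t^2" "w n r"] by simp
    qed
    also have "\<dots> \<le> (\<Sum>r<m^n. w n r * (E n r - n * mu)^2 / t^2)"
      by (rule sum_mono2) (auto simp: Dset_def w_nonneg)
    also have "\<dots> = n * sigma / t^2" using w_var by (simp flip: sum_divide_distrib)
    also have "\<dots> \<le> n * S^2 / t^2"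
      using sigma_le np tp by (simp add: divide_right_mono)
    also have "\<dots> = real n powr (1 - 2*\<alpha>)"
    proof -
      have "t^2 = real n powr (2*\<alpha>) * S^2" unfolding t_def
        by (simp add: power_mult_distrib power2_eq_square flip: powr_add)
      then have "n * S^2 / t^2 = real n / real n powr (2*\<alpha>)" using Sp by simp
      also have "\<dots> = real n powr (1 - 2*\<alpha>)" using np by (simp add: powr_diff)
      finally show ?thesis .
    qed
    finally show ?thesis using diff by simp
  qed
qed

lemma chi_carrier: "chi n \<in> carrier_vec (m^n)" unfolding chi_def by auto
lemma chi_dim: "dim_vec (chi n) = m^n" unfolding chi_def by auto

lemma chi_unit: "unit_vec_c (m^n) (chi n)"
proof (cases "wT n > 0")
  case True
  have "(\<Sum>i<m^n. (cmod (chi n $ i))^2) = (\<Sum>i<m^n. if i \<in> Ty n then w n i / wT n else 0)"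
    using True by (intro sum.cong refl)
       (auto simp: chi_def w_def norm_divide power_divide)
  also have "\<dots> = (\<Sum>i\<in>Ty n. w n i / wT n)"
    using Ty_sub by (simp add: sum.inter_restrict[symmetric] Int_absorb1)
  also have "\<dots> = 1" using True by (simp add: wT_def flip: sum_divide_distrib)
  finally show ?thesis unfolding unit_vec_c_def using chi_carrier[of n]
    by (simp add: cinner_self)
next
  case False
  have "(\<Sum>i<m^n. (cmod (chi n $ i))^2) = (\<Sum>i<m^n. if i = 0 then 1 else 0)"
    using False mpos[of n] by (intro sum.cong refl) (auto simp: chi_def)
  also have "\<dots> = 1" using mpos[of n] by simp
  finally show ?thesis unfolding unit_vec_c_def using chi_carrier[of n]
    by (simp add: cinner_self)
qed

lemma pv_dim: "dim_vec (pv psi n) = m^n" by (simp add: dpsi)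

lemma pv_unit: "pv psi n \<in> carrier_vec (m^n)" "cinner (pv psi n) (pv psi n) = 1"
proof -
  show "pv psi n \<in> carrier_vec (m^n)" unfolding carrier_vec_def using pv_dim by simp
  have "(\<Sum>i<m^n. (cmod (pv psi n $ i))^2) = 1" using w_total[of n] unfolding w_def .
  then show "cinner (pv psi n) (pv psi n) = 1" unfolding cinner_self pv_dim by simp
qed

lemma overlap: "(cmod (cinner (pv psi n) (chi n)))^2 = (if wT n > 0 then wT n else w n 0)"
proof (cases "wT n > 0")
  case True
  have "cinner (pv psi n) (chi n) = (\<Sum>i<m^n. if i \<in> Ty n then complex_of_real (w n i / sqrt (wT n)) else 0)"
    unfolding cinner_def chi_dim
  proof (intro sum.cong refl)
    fix i assume "i \<in> {..<m^n}"
    then have i: "i < m^n" by simp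
    have "cnj (pv psi n $ i) * (pv psi n $ i / complex_of_real (sqrt (wT n)))
        = (cnj (pv psi n $ i) * pv psi n $ i) / complex_of_real (sqrt (wT n))" by simp
    also have "\<dots> = complex_of_real (w n i / sqrt (wT n))"
      unfolding cnj_mult_self w_def by simp
    finally show "cnj (pv psi n $ i) * chi n $ i = (if i \<in> Ty n then complex_of_real (w n i / sqrt (wT n)) else 0)"
      using True i by (simp add: chi_def)
  qed
  also have "\<dots> = (\<Sum>i\<in>Ty n. complex_of_real (w n i / sqrt (wT n)))"
    using Ty_sub by (simp add: sum.inter_restrict[symmetric] Int_absorb1)
  also have "\<dots> = complex_of_real (wT n / sqrt (wT n))"
    by (simp add: wT_def sum_divide_distrib)
  also have "\<dots> = complex_of_real (sqrt (wT n))" using True by (simp add: real_div_sqrt)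
  finally show ?thesis using True by simp
next
  case False
  have "cinner (pv psi n) (chi n) = (\<Sum>i<m^n. if i = 0 then cnj (pv psi n $ 0) else 0)"
    unfolding cinner_def using False chi_carrier[of n]
    using mpos[of n] by (intro sum.cong) (auto simp: chi_def)
  also have "\<dots> = cnj (pv psi n $ 0)" using mpos[of n] by simp
  finally show ?thesis using False by (simp add: w_def)
qed

lemma w_le1: "w n r \<le> 1" if "r < m^n"
proof -
  have "w n r \<le> (\<Sum>r<m^n. w n r)"
    by (rule member_le_sum) (use that w_nonneg in auto)
  then show ?thesis using w_total by simp
qed

lemma tn_eq: "trace_norm (kron_pow (outer psi) n - outer (chi n)) =
    2 * sqrt \<bar>1 - (cmod (cinner (pv psi n) (chi n)))^2\<bar>"
  using kron_pow_outer[of psi n] dpsi m trace_norm_pure[OF pv_unit(1) chi_carrier pv_unit(2)] chi_unit[of n]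
  unfolding unit_vec_c_def by simp

lemma tn_bound: assumes n: "n \<ge> 1"
  shows "trace_norm (kron_pow (outer psi) n - outer (chi n)) \<le> 2 * sqrt (real n powr (1 - 2*\<alpha>))"
proof (cases "wT n > 0")
  case True
  then have "trace_norm (kron_pow (outer psi) n - outer (chi n)) = 2 * sqrt (1 - wT n)"
    unfolding tn_eq overlap using wT_bounds[of n] by simp
  also have "\<dots> \<le> 2 * sqrt (real n powr (1 - 2*\<alpha>))" using atyp[OF n] by simp
  finally show ?thesis .
next
  case False
  then have "wT n = 0" using wT_bounds[of n] by simp
  then have ge1: "1 \<le> real n powr (1 - 2*\<alpha>)" using atyp[OF n] by simp
  have "trace_norm (kron_pow (outer psi) n - outer (chi n)) = 2 * sqrt \<bar>1 - w n 0\<bar>"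
    unfolding tn_eq overlap using False by simp
  also have "\<dots> \<le> 2 * 1" using w_nonneg[of n 0] w_le1[of 0 n] mpos[of n] by simp
  also have "\<dots> \<le> 2 * sqrt (real n powr (1 - 2*\<alpha>))" using ge1 by simp
  finally show ?thesis .
qed

lemma tn_lim: "(\<lambda>n. trace_norm (kron_pow (outer psi) n - outer (chi n))) \<longlonglongrightarrow> 0"
proof (rule tendsto_sandwich[of "\<lambda>_. 0" _ _ "\<lambda>n. 2 * sqrt (real n powr (1 - 2*\<alpha>))"])
  show "\<forall>\<^sub>F n in sequentially. 0 \<le> trace_norm (kron_pow (outer psi) n - outer (chi n))"
    unfolding tn_eq by simp
  show "\<forall>\<^sub>F n in sequentially. trace_norm (kron_pow (outer psi) n - outer (chi n)) \<le> 2 * sqrt (real n powr (1 - 2*\<alpha>))"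
    by (rule eventually_sequentiallyI[of 1]) (rule tn_bound)
  show "(\<lambda>_. 0) \<longlonglongrightarrow> (0::real)" by simp
  have "(\<lambda>n. real n powr (1 - 2*\<alpha>)) \<longlonglongrightarrow> 0"
    by (rule tendsto_neg_powr) (use alpha filterlim_real_sequentially in auto)
  then have "(\<lambda>n. sqrt (real n powr (1 - 2*\<alpha>))) \<longlonglongrightarrow> sqrt 0" by (rule tendsto_real_sqrt)
  then have "(\<lambda>n. sqrt (real n powr (1 - 2*\<alpha>)) * 2) \<longlonglongrightarrow> 0" by (intro tendsto_mult_left_zero) simp
  then show "(\<lambda>n. 2 * sqrt (real n powr (1 - 2*\<alpha>))) \<longlonglongrightarrow> 0" by (simp add: mult.commute)
qed

lemma chi_entries: "\<exists>c b. b \<le> 2 * real n powr \<alpha> * S \<and> (\<forall>r<m^n. chi n $ r \<noteq> 0 \<longrightarrow> \<bar>E n r - c\<bar> \<le> b)"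
proof (cases "wT n > 0")
  case True
  have "\<forall>r<m^n. chi n $ r \<noteq> 0 \<longrightarrow> \<bar>E n r - n * mu\<bar> \<le> real n powr \<alpha> * S"
    using True by (auto simp: chi_def Ty_def)
  moreover have "real n powr \<alpha> * S \<le> 2 * real n powr \<alpha> * S" using S_nonneg by simp
  ultimately show ?thesis by blast
next
  case False
  have "\<forall>r<m^n. chi n $ r \<noteq> 0 \<longrightarrow> \<bar>E n r - E n 0\<bar> \<le> 0"
    using False mpos[of n] by (auto simp: chi_def split: if_splits)
  moreover have "0 \<le> 2 * real n powr \<alpha> * S" using S_nonneg by simp
  ultimately show ?thesis by blast
qed

end



theorem lemma6:
  fixes m :: nat and a :: "nat \<Rightarrow> real" and psi :: "complex vec" and \<alpha> :: real
  assumes a_nonneg: "\<And>x. x < m \<Longrightarrow> a x \<ge> 0"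
    and psi_unit: "unit_vec_c m psi"
    and alpha: "1/2 < \<alpha>" "\<alpha> < 1"
  defines "HA \<equiv> mat m m (\<lambda>(i,j). if i = j then complex_of_real (a i) else 0)"
  shows "\<exists>chi :: nat \<Rightarrow> complex vec.
     (\<forall>n. unit_vec_c (m ^ n) (chi n)) \<and>
     (\<lambda>n. trace_norm (kron_pow (outer psi) n - outer (chi n))) \<longlonglongrightarrow> 0 \<and>
     (\<forall>n. \<exists>k e c. k \<le> (n + 1) ^ m \<and>
          (\<forall>j<k. \<exists>ev. eigenvector (ham_pow m HA n) (e j) ev) \<and>
          (\<forall>i<m ^ n. chi n $ i = (\<Sum>j<k. c j * e j $ i))) \<and>
     (\<forall>n. energy_spread (ham_pow m HA n) (chi n) \<le> 4 * real n powr \<alpha> * (\<Sum>x<m. a x))"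
proof -
  have psiC: "psi \<in> carrier_vec m" and pp: "cinner psi psi = 1"
    using psi_unit unfolding unit_vec_c_def by auto
  have m: "m > 0"
  proof (rule ccontr)
    assume "\<not> m > 0"
    then have "m = 0" by simp
    then have "cinner psi psi = 0" using psiC by (simp add: cinner_def)
    then show False using pp by simp
  qed
  have dm: "dim_vec psi = m" using psiC by auto
  have "complex_of_real (\<Sum>x<m. (cmod (psi $ x))^2) = 1"
    using pp unfolding cinner_self dm .
  then have psum: "(\<Sum>x<m. (cmod (psi $ x))^2) = 1" by (simp only: of_real_eq_1_iff)
  interpret L: LS2 m a psi \<alpha>
    by unfold_locales (use m psiC psum a_nonneg alpha in auto)
  have H: "ham_pow m HA n = dmat (m^n) (En m a n)" for n
    using ham_pow_diag[OF m HA_def[THEN meta_eq_to_obj_eq]] unfolding dmat_def .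
  show ?thesis
  proof (intro exI[of _ L.chi] conjI allI)
    fix n
    show "unit_vec_c (m ^ n) (L.chi n)" by (rule L.chi_unit)
  next
    show "(\<lambda>n. trace_norm (kron_pow (outer psi) n - outer (L.chi n))) \<longlonglongrightarrow> 0" by (rule L.tn_lim)
  next
    fix n
    define Vals where "Vals = (\<lambda>t. \<Sum>x<m. a x * real (t x)) ` (Pi\<^sub>E {..<m} (\<lambda>_. {..n}))"
    have "\<exists>k e c. k \<le> (n+1)^m \<and> (\<forall>j<k. \<exists>ev. eigenvector (dmat (m^n) (En m a n)) (e j) ev) \<and>
          (\<forall>i<m^n. L.chi n $ i = (\<Sum>j<k. c j * e j $ i))"
    proof (rule decomp_diag[OF L.chi_carrier])
      show "En m a n r \<in> Vals" if "r < m^n" for r unfolding Vals_def by (rule card_types[OF m])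
      show "finite Vals" unfolding Vals_def by (simp add: finite_PiE)
      show "card Vals \<le> (n+1)^m" unfolding Vals_def by (rule card_vals)
    qed
    then show "\<exists>k e c. k \<le> (n + 1) ^ m \<and>
          (\<forall>j<k. \<exists>ev. eigenvector (ham_pow m HA n) (e j) ev) \<and>
          (\<forall>i<m ^ n. L.chi n $ i = (\<Sum>j<k. c j * e j $ i))" unfolding H .
  next
    fix n
    obtain c b where b: "b \<le> 2 * real n powr \<alpha> * L.S"
      and bnd: "\<forall>r<m^n. L.chi n $ r \<noteq> 0 \<longrightarrow> \<bar>En m a n r - c\<bar> \<le> b"
      using L.chi_entries[of n] by blast
    obtain r0 where r0: "r0 < m^n" "L.chi n $ r0 \<noteq> 0" using unit_nonzero[OF L.chi_unit[of n]] by blast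
    have "energy_spread (dmat (m^n) (En m a n)) (L.chi n) \<le> 2 * b"
      by (rule spread_diag[OF L.chi_carrier r0]) (use bnd in auto)
    also have "\<dots> \<le> 4 * real n powr \<alpha> * (\<Sum>x<m. a x)" using b unfolding L.S_def by (simp add: mult_ac)
    finally show "energy_spread (ham_pow m HA n) (L.chi n) \<le> 4 * real n powr \<alpha> * (\<Sum>x<m. a x)"
      unfolding H .
  qed
qed


end
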